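(* For any integers $n\ge2$ and $a$, $G(\alpha;n,na,n)\ne\emptyset$ if and only if $a\ge2$ and $\alpha>0$.
   Context: Work on $\mathbb P^1$ over an algebraically closed field. A coherent system of type $(n,d,k)$ is a pair $(E,V)$ with $E$ a vector bundle of rank $n$ and degree $d$ and $V\subset H^0(E)$ a subspace of dimension $k$. The $\alpha$-slope is $\mu_\alpha(E,V)=\frac dn+\alpha\frac kn$; a coherent subsystem $(F,W)$ has $F\subset E$ a subbundle and $W\subset V\cap H^0(F)$; $(E,V)$ is $\alpha$-stable if $\mu_\alpha(F,W)<\mu_\alpha(E,V)$ for all proper coherent subsystems. $G(\alpha;n,d,k)$ is the moduli space of $\alpha$-stable coherent systems of type $(n,d,k)$. *)

theory Defs
  imports "HOL-Computational_Algebra.Polynomial" Complex_Main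
begin

text \<open>By Grothendieck's splitting theorem every vector bundle of rank n on P^1 is
  O(a_1) + ... + O(a_n); it is recorded by its splitting type, a list of integers.
  A global section of O(d) is a binary form of degree d, represented by its
  dehomogenisation at t = 1, i.e. a polynomial of degree at most d (zero if d < 0).
  Morphisms O(b) -> O(a) are forms of degree a - b.\<close>

definition hform :: "int \<Rightarrow> 'k::field poly \<Rightarrow> bool" where
  "hform d p \<longleftrightarrow> (if d < 0 then p = 0 else degree p \<le> nat d)"

definition sections :: "int list \<Rightarrow> (nat \<Rightarrow> 'k::field poly) set" where
  "sections as = {s. (\<forall>i<length as. hform (as!i) (s i)) \<and> (\<forall>i\<ge>length as. s i = 0)}"

definition bdeg :: "int list \<Rightarrow> int" where
  "bdeg as = sum_list as"

definition lin_comb :: "(nat \<Rightarrow> 'k::field) \<Rightarrow> (nat \<Rightarrow> 'k poly) list \<Rightarrow> nat \<Rightarrow> 'k poly" where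
  "lin_comb c vs = (\<lambda>i. \<Sum>j<length vs. smult (c j) ((vs!j) i))"

definition lin_indep :: "(nat \<Rightarrow> 'k::field poly) list \<Rightarrow> bool" where
  "lin_indep vs \<longleftrightarrow> (\<forall>c. lin_comb c vs = (\<lambda>_. 0) \<longrightarrow> (\<forall>j<length vs. c j = 0))"

definition lspan :: "(nat \<Rightarrow> 'k::field poly) list \<Rightarrow> (nat \<Rightarrow> 'k poly) set" where
  "lspan vs = {lin_comb c vs | c. True}"

text \<open>Fibre of a morphism matrix M : O(bs) -> O(as) at the affine point [x:1] and at
  the point at infinity [1:0].\<close>
definition fibre_aff :: "int list \<Rightarrow> int list \<Rightarrow> (nat \<Rightarrow> nat \<Rightarrow> 'k::field poly) \<Rightarrow> 'k \<Rightarrow> nat \<Rightarrow> nat \<Rightarrow> 'k" where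
  "fibre_aff as bs M x = (\<lambda>i j. poly (M i j) x)"

definition fibre_inf :: "int list \<Rightarrow> int list \<Rightarrow> (nat \<Rightarrow> nat \<Rightarrow> 'k::field poly) \<Rightarrow> nat \<Rightarrow> nat \<Rightarrow> 'k" where
  "fibre_inf as bs M = (\<lambda>i j. if as!i - bs!j < 0 then 0 else coeff (M i j) (nat (as!i - bs!j)))"

definition inj_matrix :: "nat \<Rightarrow> nat \<Rightarrow> (nat \<Rightarrow> nat \<Rightarrow> 'k::field) \<Rightarrow> bool" where
  "inj_matrix n m A \<longleftrightarrow> (\<forall>c. (\<forall>i<n. (\<Sum>j<m. A i j * c j) = 0) \<longrightarrow> (\<forall>j<m. c j = 0))"

text \<open>M is an embedding of the bundle O(bs) as a subbundle of O(as): a morphism of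
  bundles that is injective on every fibre of P^1.\<close>
definition subbundle_emb :: "int list \<Rightarrow> int list \<Rightarrow> (nat \<Rightarrow> nat \<Rightarrow> 'k::field poly) \<Rightarrow> bool" where
  "subbundle_emb as bs M \<longleftrightarrow>
     (\<forall>i<length as. \<forall>j<length bs. hform (as!i - bs!j) (M i j)) \<and>
     (\<forall>x. inj_matrix (length as) (length bs) (fibre_aff as bs M x)) \<and>
     inj_matrix (length as) (length bs) (fibre_inf as bs M)"

definition sub_sections :: "int list \<Rightarrow> int list \<Rightarrow> (nat \<Rightarrow> nat \<Rightarrow> 'k::field poly) \<Rightarrow> (nat \<Rightarrow> 'k poly) set" where
  "sub_sections as bs M =
     {(\<lambda>i. if i < length as then (\<Sum>j<length bs. M i j * q j) else 0) | q. q \<in> sections bs}"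

definition mu :: "real \<Rightarrow> int \<Rightarrow> int \<Rightarrow> nat \<Rightarrow> real" where
  "mu \<alpha> n d k = real_of_int d / real_of_int n + \<alpha> * real k / real_of_int n"

text \<open>A coherent system (E,V): E with splitting type as, V spanned by the linearly
  independent sections vs (so dim V = length vs).\<close>
definition coh_system :: "int list \<Rightarrow> (nat \<Rightarrow> 'k::field poly) list \<Rightarrow> bool" where
  "coh_system as vs \<longleftrightarrow> set vs \<subseteq> sections as \<and> lin_indep vs"

text \<open>A coherent subsystem (F,W) is given by a subbundle F (nonzero,
  splitting type bs, embedding M) and W \<subseteq> V \<inter> H^0(F), given by a basis ws.
  It is proper if F \<noteq> E (rank smaller) or W \<noteq> V (dimension smaller).\<close>
definition alpha_stable :: "real \<Rightarrow> int list \<Rightarrow> (nat \<Rightarrow> 'k::field poly) list \<Rightarrow> bool" where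
  "alpha_stable \<alpha> as vs \<longleftrightarrow> coh_system as vs \<and> as \<noteq> [] \<and>
     (\<forall>bs M ws. bs \<noteq> [] \<and> length bs \<le> length as \<and> subbundle_emb as bs M \<and>
        lin_indep ws \<and> set ws \<subseteq> lspan vs \<inter> sub_sections as bs M \<and>
        (length bs < length as \<or> length ws < length vs) \<longrightarrow>
        mu \<alpha> (int (length bs)) (bdeg bs) (length ws)
          < mu \<alpha> (int (length as)) (bdeg as) (length vs))"

definition G_nonempty :: "'k::field itself \<Rightarrow> real \<Rightarrow> nat \<Rightarrow> int \<Rightarrow> nat \<Rightarrow> bool" where
  "G_nonempty _ \<alpha> n d k \<longleftrightarrow>
     (\<exists>as (vs :: (nat \<Rightarrow> 'k poly) list). length as = n \<and> bdeg as = d \<and> length vs = k \<and>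
        alpha_stable \<alpha> as vs)"

end

theory Submission
  imports Defs Jordan_Normal_Form.Determinant "HOL-Library.Function_Algebras"
begin


interpretation fv: vector_space "\<lambda>(c::'k::field) (f::nat \<Rightarrow> 'k) i. c * f i"
  by unfold_locales (auto simp: fun_eq_iff algebra_simps)

lemma sum_fun_app: "(sum f A) x = sum (\<lambda>a. f a x) A"
  by (induction A rule: infinite_finite_induct) auto

definition lcomb :: "(nat \<Rightarrow> 'k::field) \<Rightarrow> (nat \<Rightarrow> 'k) list \<Rightarrow> nat \<Rightarrow> 'k" where
  "lcomb d us = (\<lambda>i. \<Sum>l<length us. d l * (us!l) i)"

definition lindep :: "(nat \<Rightarrow> 'k::field) list \<Rightarrow> bool" where
  "lindep us \<longleftrightarrow> (\<forall>d. lcomb d us = (\<lambda>_. 0) \<longrightarrow> (\<forall>l<length us. d l = 0))"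

lemma lindep_distinct:
  fixes us :: "(nat \<Rightarrow> 'k::field) list"
  assumes "lindep us" shows "distinct us"
proof (rule ccontr)
  assume "\<not> distinct us"
  then obtain l l' where ll: "l < length us" "l' < length us" "l \<noteq> l'" "us!l = us!l'"
    by (auto simp: distinct_conv_nth)
  define d where "d = (\<lambda>x. if x = l then (1::'k) else if x = l' then -1 else 0)"
  have "lcomb d us = (\<lambda>_. 0)"
  proof
    fix i
    have "(\<Sum>x<length us. d x * (us!x) i) = (\<Sum>x\<in>{l,l'}. d x * (us!x) i)"
      by (rule sum.mono_neutral_right) (use ll in \<open>auto simp: d_def\<close>)
    also have "\<dots> = 0" using ll by (simp add: d_def)
    finally show "lcomb d us i = 0" by (simp add: lcomb_def)
  qed
  with assms ll show False by (auto simp: lindep_def d_def dest!: spec[of _ d])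
qed

lemma lindep_independent:
  fixes us :: "(nat \<Rightarrow> 'k::field) list"
  assumes "lindep us" shows "fv.independent (set us)"
proof -
  have dist: "distinct us" using lindep_distinct[OF assms] .
  show ?thesis
  proof (subst fv.dependent_finite, simp, intro notI, elim exE conjE bexE)
    fix u v assume v: "v \<in> set us" "u v \<noteq> 0"
      and s: "(\<Sum>v\<in>set us. (\<lambda>i. u v * v i)) = 0"
    define d where "d = (\<lambda>l. u (us!l))"
    have eq: "(\<Sum>v\<in>set us. f v) = (\<Sum>l<length us. f (us!l))" for f :: "(nat \<Rightarrow> 'k) \<Rightarrow> 'b::comm_monoid_add"
      using dist by (simp add: sum_list_distinct_conv_sum_set[symmetric] sum_list_sum_nth atLeast0LessThan)
    have "lcomb d us = (\<lambda>_. 0)"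
    proof
      fix i
      have "(\<Sum>v\<in>set us. (\<lambda>i. u v * v i)) i = 0" using s by simp
      then show "lcomb d us i = 0"
        by (simp add: sum_fun_app eq lcomb_def d_def)
    qed
    moreover obtain l where "l < length us" "us!l = v" using v by (auto simp: in_set_conv_nth)
    ultimately show False using assms v by (auto simp: lindep_def d_def)
  qed
qed

lemma lcomb_in_span: "lcomb g cs \<in> fv.span (set cs)"
proof -
  have "lcomb g cs = (\<Sum>j<length cs. (\<lambda>i. g j * (cs!j) i))"
    by (simp add: lcomb_def fun_eq_iff sum_fun_app)
  also have "\<dots> \<in> fv.span (set cs)"
    by (intro fv.span_sum fv.span_scale[of _ _ "g _", simplified] fv.span_base) auto
  finally show ?thesis .
qed

lemma count_bound:
  fixes us cs :: "(nat \<Rightarrow> 'k::field) list"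
  assumes "lindep us" and "set us \<subseteq> fv.span (set cs)"
  shows "length us \<le> length cs"
proof -
  have "card (set us) \<le> card (set cs)"
    using fv.independent_span_bound[OF _ lindep_independent[OF assms(1)] assms(2)] by auto
  also have "\<dots> \<le> length cs" by (rule card_length)
  finally show ?thesis using distinct_card[OF lindep_distinct[OF assms(1)]] by simp
qed



lemma hform_iff: "hform d p \<longleftrightarrow> p = 0 \<or> (0 \<le> d \<and> int (degree p) \<le> d)"
  by (auto simp: hform_def)

lemma hform_0[simp]: "hform d 0" by (simp add: hform_def)

lemma hform_add: "hform d p \<Longrightarrow> hform d q \<Longrightarrow> hform d (p + q)"
  unfolding hform_def using degree_add_le by (auto split: if_splits)

lemma hform_smult: "hform d p \<Longrightarrow> hform d (Polynomial.smult c p)"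
  unfolding hform_def using Polynomial.degree_smult_le[of c p] by (auto split: if_splits)

lemma hform_sum: "(\<And>j. j \<in> A \<Longrightarrow> hform d (f j)) \<Longrightarrow> hform d (sum f A)"
  by (induction A rule: infinite_finite_induct) (auto intro: hform_add)

lemma lin_comb_sections:
  assumes "set vs \<subseteq> sections as"
  shows "lin_comb c vs \<in> sections as"
proof -
  have vj: "\<And>j. j < length vs \<Longrightarrow> vs!j \<in> sections as" using assms by auto
  show ?thesis unfolding sections_def lin_comb_def
  proof (intro CollectI conjI allI impI)
    fix i assume "i < length as"
    then show "hform (as ! i) (\<Sum>j<length vs. Polynomial.smult (c j) ((vs ! j) i))"
      using vj by (auto intro!: hform_sum hform_smult simp: sections_def)
  next
    fix i assume "length as \<le> i"
    then show "(\<Sum>j<length vs. Polynomial.smult (c j) ((vs ! j) i)) = 0"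
      using vj by (auto intro!: sum.neutral simp: sections_def)
  qed
qed

lemma lspan_sections:
  assumes "set vs \<subseteq> sections as" "s \<in> lspan vs"
  shows "s \<in> sections as"
  using assms lin_comb_sections by (auto simp: lspan_def)

lemma inj_matrix_1: "inj_matrix n (Suc 0) F \<longleftrightarrow> (\<exists>i<n. F i 0 \<noteq> 0)"
proof
  assume a: "inj_matrix n (Suc 0) F"
  show "\<exists>i<n. F i 0 \<noteq> 0"
  proof (rule ccontr)
    assume "\<not> (\<exists>i<n. F i 0 \<noteq> 0)"
    then have h: "\<And>i. i < n \<Longrightarrow> (\<Sum>j<Suc 0. F i j * 1) = 0" by simp
    from a[unfolded inj_matrix_def, rule_format, of "\<lambda>_. 1" 0, OF h] show False by simp
  qed
next
  assume "\<exists>i<n. F i 0 \<noteq> 0"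
  then show "inj_matrix n (Suc 0) F" unfolding inj_matrix_def by auto
qed

lemma hform_inf_step:
  assumes "hform d p" "0 \<le> d \<Longrightarrow> coeff p (nat d) = 0"
  shows "hform (d - 1) p"
proof (cases "p = 0")
  case False
  with assms(1) have d: "0 \<le> d" "int (degree p) \<le> d" by (auto simp: hform_iff)
  have "degree p \<noteq> nat d" using assms(2)[OF d(1)] False by (metis leading_coeff_0_iff)
  with d show ?thesis by (auto simp: hform_iff)
qed simp

lemma hform_aff_step:
  assumes "hform d p" "poly p x = 0"
  shows "hform (d - 1) (p div [:-x,1:])" "p = (p div [:-x,1:]) * [:-x,1:]"
proof -
  define l where "l = [:-x,1:]"
  have l: "degree l = 1" "l \<noteq> 0" by (auto simp: l_def)
  have dv: "l dvd p" using assms(2) by (simp add: poly_eq_0_iff_dvd l_def)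
  then have eq: "p = (p div l) * l" by (metis dvd_div_mult_self)
  then show "p = (p div [:-x,1:]) * [:-x,1:]" by (simp add: l_def)
  have "hform (d - 1) (p div l)"
  proof (cases "p div l = 0")
    case False
    have "degree p = degree (p div l) + 1"
      using False l by (subst eq) (simp add: degree_mult_eq)
    moreover have "p \<noteq> 0" using False by auto
    ultimately show ?thesis using assms(1) by (auto simp: hform_iff)
  qed simp
  then show "hform (d - 1) (p div [:-x,1:])" by (simp add: l_def)
qed

lemma mult_aux: "s = h * q \<Longrightarrow> h = h' * l \<Longrightarrow> s = h' * (q * (l::'a::comm_ring_1))"
  by (simp add: mult_ac)

definition vt :: "int list \<Rightarrow> (nat \<Rightarrow> 'k::field poly) \<Rightarrow> int \<Rightarrow> (nat \<Rightarrow> 'k poly) \<Rightarrow> 'k poly \<Rightarrow> bool" where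
  "vt as s b h q \<longleftrightarrow> hform b q \<and> q \<noteq> 0 \<and> (\<forall>i<length as. hform (as!i - b) (h i) \<and> s i = h i * q)"

lemma vt_step:
  assumes "vt as s b h q" "\<not> subbundle_emb as [b] (\<lambda>i j. h i)"
  shows "\<exists>h' q'. vt as s (b + 1) h' q'"
proof -
  from assms(1) have q: "hform b q" "q \<noteq> 0" and hh: "\<And>i. i < length as \<Longrightarrow> hform (as!i - b) (h i)"
    and sh: "\<And>i. i < length as \<Longrightarrow> s i = h i * q" by (auto simp: vt_def)
  have b0: "0 \<le> b" using q by (auto simp: hform_iff)
  from assms(2) hh consider (aff) x where "\<forall>i<length as. poly (h i) x = 0"
    | (inf) "\<forall>i<length as. fibre_inf as [b] (\<lambda>i j. h i) i 0 = 0"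
    by (auto simp: subbundle_emb_def inj_matrix_1 fibre_aff_def)
  then show ?thesis
  proof cases
    case aff
    define h' where "h' = (\<lambda>i. h i div [:-x,1:])"
    have "vt as s (b + 1) h' (q * [:-x,1:])"
      unfolding vt_def
    proof (intro conjI allI impI)
      define l where "l = [:-x,1:]"
      have l: "degree l = 1" "l \<noteq> 0" by (auto simp: l_def)
      have "degree (q * l) = degree q + 1" using q(2) l by (subst degree_mult_eq) auto
      then have "hform (b + 1) (q * l)" using q b0 by (auto simp: hform_iff)
      then show "hform (b + 1) (q * [:-x,1:])" by (simp add: l_def)
      have "q * l \<noteq> 0" using q l by auto
      then show "q * [:-x,1:] \<noteq> 0" by (simp add: l_def)
    next
      fix i assume i: "i < length as"
      have "hform (as ! i - b - 1) (h' i)" using hform_aff_step(1)[OF hh[OF i]] aff i by (auto simp: h'_def)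
      then show "hform (as ! i - (b + 1)) (h' i)" by (simp add: diff_diff_eq)
      have e: "h i = h' i * [:-x,1:]" unfolding h'_def by (rule hform_aff_step(2)[OF hh[OF i]]) (use aff i in simp)
      show "s i = h' i * (q * [:-x,1:])" by (rule mult_aux[OF sh[OF i] e])
    qed
    then show ?thesis by blast
  next
    case inf
    have "vt as s (b + 1) h q"
      unfolding vt_def
    proof (intro conjI allI impI)
      show "hform (b + 1) q" using q b0 by (auto simp: hform_iff)
    next
      fix i assume i: "i < length as"
      have "hform (as ! i - b - 1) (h i)"
        by (rule hform_inf_step[OF hh[OF i]]) (use inf i in \<open>auto simp: fibre_inf_def\<close>)
      then show "hform (as ! i - (b + 1)) (h i)" by (simp add: diff_diff_eq)
    qed (use q sh in auto)
    then show ?thesis by blast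
  qed
qed

lemma vt_sat:
  assumes "vt as s b h q" "i0 < length as" "s i0 \<noteq> 0"
  shows "\<exists>b' h' q'. b \<le> b' \<and> vt as s b' h' q' \<and> subbundle_emb as [b'] (\<lambda>i j. h' i)"
proof -
  have main: "\<And>b h q. nat (as!i0 - b) = k \<Longrightarrow> vt as s b h q \<Longrightarrow>
     \<exists>b' h' q'. b \<le> b' \<and> vt as s b' h' q' \<and> subbundle_emb as [b'] (\<lambda>i j. h' i)" for k
  proof (induction k rule: less_induct)
    case (less k b h q)
    show ?case
    proof (cases "subbundle_emb as [b] (\<lambda>i j. h i)")
      case True then show ?thesis using less.prems by blast
    next
      case False
      obtain h' q' where v: "vt as s (b+1) h' q'" using vt_step[OF less.prems(2) False] by blast
      have "h' i0 \<noteq> 0" using v assms by (auto simp: vt_def)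
      hence "b + 1 \<le> as!i0" using v assms(2) by (auto simp: vt_def hform_iff)
      hence "nat (as!i0 - (b+1)) < k" using less.prems(1) by auto
      from less.IH[OF this refl v] obtain b' h' q' where
        "b + 1 \<le> b'" "vt as s b' h' q'" "subbundle_emb as [b'] (\<lambda>i j. h' i)" by blast
      then show ?thesis by (intro exI[of _ b'] exI[of _ h'] exI[of _ q']) auto
    qed
  qed
  show ?thesis by (rule main[OF refl assms(1)])
qed

lemma stable_sat:
  assumes st: "alpha_stable \<alpha> as vs" and n: "2 \<le> length as"
    and s: "s \<in> lspan vs" and i0: "i0 < length as" "s i0 \<noteq> 0"
    and v: "vt as s b h q"
  shows "of_int b + \<alpha> < mu \<alpha> (int (length as)) (bdeg as) (length vs)"
proof -
  have secs: "set vs \<subseteq> sections as" using st by (auto simp: alpha_stable_def coh_system_def)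
  have sS: "s \<in> sections as" using lspan_sections[OF secs s] .
  obtain b' h' q' where b': "b \<le> b'" "vt as s b' h' q'" "subbundle_emb as [b'] (\<lambda>i j. h' i)"
    using vt_sat[OF v i0] by blast
  have "s \<in> sub_sections as [b'] (\<lambda>i j. h' i)"
  proof -
    define qq where "qq = (\<lambda>j::nat. if j = 0 then q' else 0)"
    have "qq \<in> sections [b']" using b'(2) by (auto simp: sections_def qq_def vt_def)
    moreover have "s = (\<lambda>i. if i < length as then (\<Sum>j<length [b']. h' i * qq j) else 0)"
      using b'(2) sS by (auto simp: fun_eq_iff qq_def vt_def sections_def)
    ultimately show ?thesis unfolding sub_sections_def by blast
  qed
  moreover have "lin_indep [s]"
    using i0 by (auto simp: lin_indep_def lin_comb_def fun_eq_iff dest!: spec[of _ i0])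
  ultimately have "mu \<alpha> (int (length [b'])) (bdeg [b']) (length [s]) < mu \<alpha> (int (length as)) (bdeg as) (length vs)"
  proof -
    have "\<forall>bs M ws. bs \<noteq> [] \<and> length bs \<le> length as \<and> subbundle_emb as bs M \<and>
        lin_indep ws \<and> set ws \<subseteq> lspan vs \<inter> sub_sections as bs M \<and>
        (length bs < length as \<or> length ws < length vs) \<longrightarrow>
        mu \<alpha> (int (length bs)) (bdeg bs) (length ws)
          < mu \<alpha> (int (length as)) (bdeg as) (length vs)" using st unfolding alpha_stable_def by blast
    from spec[OF spec[OF spec[OF this, of "[b']"], of "\<lambda>i j. h' i"], of "[s]"]
    show ?thesis using n b'(3) s \<open>s \<in> sub_sections as [b'] (\<lambda>i j. h' i)\<close> \<open>lin_indep [s]\<close> by simp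
  qed
  then show ?thesis using b'(1) by (simp add: mu_def bdeg_def)
qed



lemma coeff_mult_bound:
  fixes p q :: "'a::comm_semiring_1 poly"
  assumes "degree p \<le> m" "degree q \<le> k"
  shows "coeff (p * q) (m + k) = coeff p m * coeff q k"
proof -
  have "coeff (p * q) (m + k) = (\<Sum>i\<le>m + k. coeff p i * coeff q (m + k - i))"
    by (rule coeff_mult)
  also have "\<dots> = (\<Sum>i\<in>{m}. coeff p i * coeff q (m + k - i))"
  proof (rule sum.mono_neutral_right)
    show "\<forall>i\<in>{..m + k} - {m}. coeff p i * coeff q (m + k - i) = 0"
    proof
      fix i assume "i \<in> {..m + k} - {m}"
      then have "i < m \<or> i > m" by auto
      then show "coeff p i * coeff q (m + k - i) = 0"
      proof
        assume "i < m" then have "m + k - i > k" by auto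
        then have "coeff q (m + k - i) = 0" using assms(2) by (intro coeff_eq_0) auto
        then show ?thesis by simp
      next
        assume "i > m" then have "coeff p i = 0" using assms(1) by (intro coeff_eq_0) auto
        then show ?thesis by simp
      qed
    qed
  qed auto
  finally show ?thesis by simp
qed

lemma coeff_prod_bound:
  fixes f :: "'i \<Rightarrow> 'a::comm_semiring_1 poly"
  assumes "finite I" "\<And>i. i \<in> I \<Longrightarrow> degree (f i) \<le> d i"
  shows "coeff (\<Prod>i\<in>I. f i) (\<Sum>i\<in>I. d i) = (\<Prod>i\<in>I. coeff (f i) (d i))"
  using assms
proof (induction I rule: finite_induct)
  case (insert x F)
  have "degree (\<Prod>i\<in>F. f i) \<le> (\<Sum>i\<in>F. d i)"
    by (rule order.trans[OF degree_prod_sum_le[OF insert.hyps(1)]]) (use insert.prems in \<open>auto intro: sum_mono\<close>)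
  then show ?case using insert by (simp add: coeff_mult_bound)
qed simp

lemma coeff_signof_mult: "coeff (signof p * P) N = signof p * coeff P N"
  by (simp add: sign_def)

lemma det_top_coeff:
  fixes A :: "'a::comm_ring_1 poly mat"
  assumes A: "A \<in> carrier_mat n n" and deg: "\<And>i j. i < n \<Longrightarrow> j < n \<Longrightarrow> degree (A $$ (i,j)) \<le> d i"
  shows "coeff (det A) (\<Sum>i<n. d i) = det (mat n n (\<lambda>(i,j). coeff (A $$ (i,j)) (d i)))"
proof -
  have "coeff (det A) (\<Sum>i<n. d i) =
     (\<Sum>p\<in>{p. p permutes {0..<n}}. signof p * coeff (\<Prod>i = 0..<n. A $$ (i, p i)) (\<Sum>i<n. d i))"
    by (simp add: det_def'[OF A] coeff_sum coeff_signof_mult)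
  also have "\<dots> = (\<Sum>p\<in>{p. p permutes {0..<n}}. signof p * (\<Prod>i = 0..<n. coeff (A $$ (i, p i)) (d i)))"
  proof (rule sum.cong[OF refl])
    fix p assume "p \<in> {p. p permutes {0..<n}}"
    then have pn: "\<And>i. i < n \<Longrightarrow> p i < n" by (auto simp: permutes_in_image)
    have "(\<Sum>i<n. d i) = (\<Sum>i=0..<n. d i)" by (simp add: atLeast0LessThan)
    then show "signof p * coeff (\<Prod>i = 0..<n. A $$ (i, p i)) (\<Sum>i<n. d i) =
       signof p * (\<Prod>i = 0..<n. coeff (A $$ (i, p i)) (d i))"
      using coeff_prod_bound[of "{0..<n}" "\<lambda>i. A $$ (i, p i)" d] deg pn by auto
  qed
  also have "\<dots> = det (mat n n (\<lambda>(i,j). coeff (A $$ (i,j)) (d i)))"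
    by (subst det_def'[of _ n]) (auto intro!: sum.cong prod.cong dest: permutes_in_image)
  finally show ?thesis .
qed

lemma poly_det:
  fixes A :: "'a::comm_ring_1 poly mat"
  shows "poly (det A) x = det (map_mat (\<lambda>p. poly p x) A)"
proof -
  interpret h: comm_ring_hom "\<lambda>p. poly p x" by unfold_locales auto
  show ?thesis by simp
qed



lemma lin_comb_nz:
  assumes "lin_indep vs" "set vs \<subseteq> sections as" "j < length vs" "c j \<noteq> 0"
  shows "\<exists>i0<length as. lin_comb c vs i0 \<noteq> 0"
proof (rule ccontr)
  assume a: "\<not> (\<exists>i0<length as. lin_comb c vs i0 \<noteq> 0)"
  have "lin_comb c vs \<in> sections as" using lin_comb_sections[OF assms(2)] .
  then have "lin_comb c vs = (\<lambda>_. 0)" using a by (auto simp: sections_def fun_eq_iff not_less)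
  then show False using assms(1,3,4) by (auto simp: lin_indep_def)
qed

lemma alpha_pos:
  assumes st: "alpha_stable \<alpha> as vs" and n: "vs \<noteq> []"
  shows "\<alpha> > 0"
proof -
  define M where "M = (\<lambda>i j::nat. if i = j then (1::'a poly) else 0)"
  have inj: "inj_matrix (length as) (length as) (\<lambda>i j. if i = j then 1 else 0 :: 'a)"
    unfolding inj_matrix_def
  proof (intro allI impI)
    fix c :: "nat \<Rightarrow> 'a" and j
    assume "\<forall>i<length as. (\<Sum>j<length as. (if i = j then 1 else 0) * c j) = 0" "j < length as"
    then have "(\<Sum>ja<length as. (if j = ja then 1 else 0) * c ja) = 0" by auto
    moreover have "(\<lambda>ja. (if j = ja then 1 else 0) * c ja) = (\<lambda>ja. if j = ja then c ja else 0)" by auto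
    moreover have "(\<Sum>ja<length as. (if j = ja then c ja else 0)) = c j"
      using \<open>j < length as\<close> by (simp add: sum.delta)
    ultimately show "c j = 0" by metis
  qed
  have "subbundle_emb as as M"
    unfolding subbundle_emb_def
  proof (intro conjI)
    show "\<forall>i<length as. \<forall>j<length as. hform (as ! i - as ! j) (M i j)"
      by (auto simp: M_def hform_def)
    show "\<forall>x. inj_matrix (length as) (length as) (fibre_aff as as M x)"
    proof
      fix x
      have "fibre_aff as as M x = (\<lambda>i j. if i = j then 1 else 0)"
        by (auto simp: fibre_aff_def M_def fun_eq_iff)
      then show "inj_matrix (length as) (length as) (fibre_aff as as M x)" using inj by simp
    qed
    have "fibre_inf as as M = (\<lambda>i j. if i = j then 1 else 0)"
      by (auto simp: fibre_inf_def M_def fun_eq_iff)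
    then show "inj_matrix (length as) (length as) (fibre_inf as as M)" using inj by simp
  qed
  moreover have "as \<noteq> []" using st by (simp add: alpha_stable_def)
  ultimately have "mu \<alpha> (int (length as)) (bdeg as) (length ([]::(nat \<Rightarrow> 'a poly) list))
      < mu \<alpha> (int (length as)) (bdeg as) (length vs)"
  proof -
    have "\<forall>bs M ws. bs \<noteq> [] \<and> length bs \<le> length as \<and> subbundle_emb as bs M \<and>
        lin_indep ws \<and> set ws \<subseteq> lspan vs \<inter> sub_sections as bs M \<and>
        (length bs < length as \<or> length ws < length vs) \<longrightarrow>
        mu \<alpha> (int (length bs)) (bdeg bs) (length ws)
          < mu \<alpha> (int (length as)) (bdeg as) (length vs)" using st unfolding alpha_stable_def by blast
    from spec[OF spec[OF spec[OF this, of as], of M], of "[]"]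
    show ?thesis using n \<open>subbundle_emb as as M\<close> \<open>as \<noteq> []\<close> by (simp add: lin_indep_def)
  qed
  then have "0 < \<alpha> * real (length vs) / real (length as)" by (simp add: mu_def)
  moreover have "0 < real (length vs)" "0 < real (length as)" using n \<open>as \<noteq> []\<close> by auto
  ultimately show ?thesis by (simp add: zero_less_divide_iff zero_less_mult_iff)
qed

lemma only_if:
  fixes vs :: "(nat \<Rightarrow> 'k::alg_closed_field poly) list"
  assumes n: "2 \<le> length as" and lv: "length vs = length as"
    and deg: "bdeg as = int (length as) * a" and st: "alpha_stable \<alpha> as vs"
  shows "2 \<le> a \<and> 0 < \<alpha>"
proof -
  let ?n = "length as"
  have vs0: "vs \<noteq> []" using n lv by auto
  have apos: "0 < \<alpha>" by (rule alpha_pos[OF st vs0])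
  have mu: "mu \<alpha> (int ?n) (bdeg as) (length vs) = of_int a + \<alpha>"
  proof -
    have "0 < ?n" using n by linarith
    then have "0 < real ?n" by simp
    then show ?thesis using lv deg by (simp add: mu_def)
  qed
  have li: "lin_indep vs" and secs: "set vs \<subseteq> sections as"
    using st by (auto simp: alpha_stable_def coh_system_def)
  have lspan: "lin_comb c vs \<in> lspan vs" for c by (auto simp: lspan_def)
  have key: "b < a" if kj: "j < ?n" and kc: "c j \<noteq> 0" and kv: "vt as (lin_comb c vs) b h q" for c j b h q
  proof -
    obtain i0 where "i0 < ?n" "lin_comb c vs i0 \<noteq> 0" using lin_comb_nz[OF li secs, of j c] kj kc lv by auto
    from stable_sat[OF st n lspan this kv] mu show ?thesis by simp
  qed
  have csec: "lin_comb c vs \<in> sections as" for c by (rule lin_comb_sections[OF secs])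
  have a1: "1 \<le> a"
  proof -
    define c where "c = (\<lambda>j::nat. if j = 0 then (1::'k) else 0)"
    have "vt as (lin_comb c vs) 0 (lin_comb c vs) 1"
      using csec[of c] by (auto simp: vt_def sections_def hform_def)
    moreover have "0 < ?n" using n by linarith
    ultimately have "0 < a" using key[of 0 c] by (simp add: c_def)
    then show ?thesis by simp
  qed
  have "a \<noteq> 1"
  proof
    assume a_1: "a = 1"
    have noaff: False if "j < ?n" "c j \<noteq> 0" "\<forall>i<?n. poly (lin_comb c vs i) x = 0" for c j x
    proof -
      let ?s = "lin_comb c vs"
      have "vt as ?s 1 (\<lambda>i. ?s i div [:-x,1:]) [:-x,1:]"
        unfolding vt_def
      proof (intro conjI allI impI)
        show "hform 1 [:- x, 1:]" by (simp add: hform_def)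
        show "[:- x, 1:] \<noteq> 0" by simp
      next
        fix i assume i: "i < ?n"
        have h: "hform (as!i) (?s i)" using csec[of c] i by (auto simp: sections_def)
        show "hform (as ! i - 1) (?s i div [:- x, 1:])" by (rule hform_aff_step(1)[OF h]) (use that i in auto)
        show "?s i = ?s i div [:- x, 1:] * [:- x, 1:]" by (rule hform_aff_step(2)[OF h]) (use that i in auto)
      qed
      from key[OF that(1,2) this] a_1 show False by simp
    qed
    have noinf: False if "j < ?n" "c j \<noteq> 0" "\<forall>i<?n. coeff (lin_comb c vs i) (nat (as!i)) = 0" for c j
    proof -
      let ?s = "lin_comb c vs"
      have "vt as ?s 1 ?s 1"
        unfolding vt_def
      proof (intro conjI allI impI)
        show "hform 1 (1::'k poly)" by (simp add: hform_def)
      next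
        fix i assume i: "i < ?n"
        have h: "hform (as!i) (?s i)" using csec[of c] i by (auto simp: sections_def)
        show "hform (as ! i - 1) (?s i)" by (rule hform_inf_step[OF h]) (use that i in auto)
      qed auto
      from key[OF that(1,2) this] a_1 show False by simp
    qed
    define A where "A = mat ?n ?n (\<lambda>(i,j). (vs!j) i)"
    have A: "A \<in> carrier_mat ?n ?n" by (simp add: A_def)
    have vecnz: "\<exists>j<?n. v $ j \<noteq> 0" if "v \<in> carrier_vec ?n" "v \<noteq> 0\<^sub>v ?n" for v :: "'k vec"
      using that by (auto simp: vec_eq_iff)
    have poly_lc: "poly (lin_comb c vs i) x = (\<Sum>j<?n. c j * poly ((vs!j) i) x)" for c i x
      using lv by (simp add: lin_comb_def poly_sum)
    have coeff_lc: "coeff (lin_comb c vs i) k = (\<Sum>j<?n. c j * coeff ((vs!j) i) k)" for c i k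
      using lv by (simp add: lin_comb_def coeff_sum)
    have roots: "poly (det A) x \<noteq> 0" for x
    proof
      assume "poly (det A) x = 0"
      then have "det (map_mat (\<lambda>p. poly p x) A) = 0" by (simp add: poly_det)
      then obtain v where v: "v \<in> carrier_vec ?n" "v \<noteq> 0\<^sub>v ?n" "map_mat (\<lambda>p. poly p x) A *\<^sub>v v = 0\<^sub>v ?n"
        using det_0_iff_vec_prod_zero[of "map_mat (\<lambda>p. poly p x) A" ?n] A by auto
      obtain j where j: "j < ?n" "v $ j \<noteq> 0" using vecnz[OF v(1,2)] by blast
      define c where "c = (\<lambda>j. if j < ?n then v $ j else 0)"
      have "\<forall>i<?n. poly (lin_comb c vs i) x = 0"
      proof (intro allI impI)
        fix i assume i: "i < ?n"
        have "(map_mat (\<lambda>p. poly p x) A *\<^sub>v v) $ i = 0" using v(3) i by simp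
        then have "(\<Sum>j = 0..<?n. poly ((vs!j) i) x * v $ j) = 0"
          using i v(1) by (simp add: A_def scalar_prod_def)
        then show "poly (lin_comb c vs i) x = 0"
          by (simp add: poly_lc c_def atLeast0LessThan mult.commute)
      qed
      from noaff[OF j(1) _ this] j show False by (simp add: c_def)
    qed
    have D0: "det A \<noteq> 0" using roots[of 0] by auto
    have Ddeg: "degree (det A) = 0" using roots alg_closed_imp_poly_has_root by blast
    define d where "d = (\<lambda>i. nat (as!i))"
    have degle: "degree (A $$ (i,j)) \<le> d i" if "i < ?n" "j < ?n" for i j
    proof -
      have "vs!j \<in> sections as" using secs that lv by auto
      then have "hform (as!i) ((vs!j) i)" using that by (auto simp: sections_def)
      then show ?thesis using that by (auto simp: A_def d_def hform_def split: if_splits)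
    qed
    have "int (\<Sum>i<?n. d i) \<ge> (\<Sum>i<?n. as!i)"
      unfolding of_nat_sum d_def by (rule sum_mono) simp
    also have "(\<Sum>i<?n. as!i) = bdeg as"
      by (simp add: bdeg_def sum_list_sum_nth atLeast0LessThan)
    finally have "int ?n \<le> int (\<Sum>i<?n. d i)" using deg a_1 by simp
    then have "0 < (\<Sum>i<?n. d i)" using n by linarith
    then have "coeff (det A) (\<Sum>i<?n. d i) = 0" using Ddeg by (intro coeff_eq_0) simp
    then have "det (mat ?n ?n (\<lambda>(i,j). coeff (A $$ (i,j)) (d i))) = 0"
      using det_top_coeff[OF A degle] by simp
    then obtain v where v: "v \<in> carrier_vec ?n" "v \<noteq> 0\<^sub>v ?n"
        "mat ?n ?n (\<lambda>(i,j). coeff (A $$ (i,j)) (d i)) *\<^sub>v v = 0\<^sub>v ?n"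
      using det_0_iff_vec_prod_zero[of "mat ?n ?n (\<lambda>(i,j). coeff (A $$ (i,j)) (d i))" ?n] by auto
    obtain j where j: "j < ?n" "v $ j \<noteq> 0" using vecnz[OF v(1,2)] by blast
    define c where "c = (\<lambda>j. if j < ?n then v $ j else 0)"
    have "\<forall>i<?n. coeff (lin_comb c vs i) (nat (as!i)) = 0"
    proof (intro allI impI)
      fix i assume i: "i < ?n"
      have "(mat ?n ?n (\<lambda>(i,j). coeff (A $$ (i,j)) (d i)) *\<^sub>v v) $ i = 0" using v(3) i by simp
      then have "(\<Sum>j = 0..<?n. coeff ((vs!j) i) (d i) * v $ j) = 0"
        using i v(1) by (simp add: A_def scalar_prod_def)
      then show "coeff (lin_comb c vs i) (nat (as!i)) = 0"
        by (simp add: coeff_lc c_def atLeast0LessThan mult.commute d_def)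
    qed
    from noinf[OF j(1) _ this] j show False by (simp add: c_def)
  qed
  then show ?thesis using a1 apos by simp
qed



definition vsec :: "nat \<Rightarrow> nat \<Rightarrow> nat \<Rightarrow> 'k::field poly" where
  "vsec n j = (\<lambda>i. if i < n then [: of_bool (i = j), of_bool (i = Suc j), of_bool (j = Suc i) :] else 0)"

definition vsl :: "nat \<Rightarrow> (nat \<Rightarrow> 'k::field poly) list" where
  "vsl n = map (vsec n) [0..<n]"

definition cv :: "nat \<Rightarrow> nat \<Rightarrow> (nat \<Rightarrow> 'k::field poly) \<Rightarrow> nat \<Rightarrow> 'k" where
  "cv n k s = (\<lambda>i. if i < n then coeff (s i) k else 0)"

definition Rop :: "nat \<Rightarrow> (nat \<Rightarrow> 'k::field) \<Rightarrow> nat \<Rightarrow> 'k" where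
  "Rop n u = (\<lambda>i. if 0 < i \<and> i < n then u (i - 1) else 0)"

definition Lop :: "nat \<Rightarrow> (nat \<Rightarrow> 'k::field) \<Rightarrow> nat \<Rightarrow> 'k" where
  "Lop n u = (\<lambda>i. if Suc i < n then u (Suc i) else 0)"

definition restr :: "nat \<Rightarrow> (nat \<Rightarrow> 'k::field) \<Rightarrow> nat \<Rightarrow> 'k" where
  "restr n c = (\<lambda>i. if i < n then c i else 0)"

lemma length_vsl[simp]: "length (vsl n) = n" by (simp add: vsl_def)

lemma nth_vsl[simp]: "j < n \<Longrightarrow> vsl n ! j = vsec n j" by (simp add: vsl_def)

lemma coeff_lc_vsl:
  "coeff (lin_comb c (vsl n) i) k = (\<Sum>j<n. c j * coeff (vsec n j i) k)"
  by (simp add: lin_comb_def coeff_sum)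

lemma cv0_vsl: "cv n 0 (lin_comb c (vsl n)) = restr n c"
proof
  fix i
  show "cv n 0 (lin_comb c (vsl n)) i = restr n c i"
  proof (cases "i < n")
    case True
    have "(\<Sum>j<n. c j * coeff (vsec n j i) 0) = (\<Sum>j<n. if j = i then c j else 0)"
      using True by (intro sum.cong) (auto simp: vsec_def)
    then show ?thesis using True by (simp add: cv_def restr_def coeff_lc_vsl)
  qed (simp add: cv_def restr_def)
qed

lemma cv1_vsl: "cv n 1 (lin_comb c (vsl n)) = Rop n (restr n c)"
proof
  fix i
  show "cv n 1 (lin_comb c (vsl n)) i = Rop n (restr n c) i"
  proof (cases "i < n \<and> 0 < i")
    case True
    have "(\<Sum>j<n. c j * coeff (vsec n j i) 1) = (\<Sum>j<n. if j = i - 1 then c j else 0)"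
      using True by (intro sum.cong) (auto simp: vsec_def)
    then show ?thesis using True by (simp add: cv_def restr_def Rop_def coeff_lc_vsl)
  next
    case False
    then show ?thesis
    proof (cases "i < n")
      case True
      with False have "i = 0" by simp
      then have "(\<Sum>j<n. c j * coeff (vsec n j i) 1) = 0"
        by (intro sum.neutral) (auto simp: vsec_def)
      then show ?thesis using True \<open>i = 0\<close> by (simp add: cv_def Rop_def coeff_lc_vsl)
    qed (simp add: cv_def Rop_def)
  qed
qed

lemma cv2_vsl: "cv n 2 (lin_comb c (vsl n)) = Lop n (restr n c)"
proof
  fix i
  show "cv n 2 (lin_comb c (vsl n)) i = Lop n (restr n c) i"
  proof (cases "Suc i < n")
    case True
    have "(\<Sum>j<n. c j * coeff (vsec n j i) 2) = (\<Sum>j<n. if j = Suc i then c j else 0)"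
      using True by (intro sum.cong) (auto simp: vsec_def numeral_2_eq_2)
    then show ?thesis using True by (simp add: cv_def restr_def Lop_def coeff_lc_vsl)
  next
    case False
    then show ?thesis
    proof (cases "i < n")
      case True
      have "(\<Sum>j<n. c j * coeff (vsec n j i) 2) = 0"
        using False by (intro sum.neutral) (auto simp: vsec_def numeral_2_eq_2)
      then show ?thesis using True False by (simp add: cv_def Lop_def coeff_lc_vsl)
    qed (simp add: cv_def Lop_def)
  qed
qed

lemma vsl_sections:
  assumes "2 \<le> a"
  shows "set (vsl n) \<subseteq> sections (replicate n a)"
proof
  fix v assume "v \<in> set (vsl n)"
  then obtain j where j: "j < n" "v = vsec n j" by (auto simp: vsl_def)
  have "degree ([: x, y, z :] :: 'a poly) \<le> 2" for x y z
    by (auto simp: degree_pCons_eq_if numeral_2_eq_2)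
  then show "v \<in> sections (replicate n a)"
    using j assms by (auto simp: sections_def vsec_def hform_def)
qed

lemma vsl_indep: "lin_indep (vsl n :: (nat \<Rightarrow> 'k::field poly) list)"
  unfolding lin_indep_def
proof (intro allI impI)
  fix c :: "nat \<Rightarrow> 'k" and j
  assume "lin_comb c (vsl n) = (\<lambda>_. 0)" "j < length (vsl n)"
  then have "restr n c j = 0" using cv0_vsl[of n c] by (metis cv_def coeff_0)
  then show "c j = 0" using \<open>j < length (vsl n)\<close> by (simp add: restr_def)
qed



lemma smult_sum_right: "Polynomial.smult c (sum f A) = (\<Sum>x\<in>A. Polynomial.smult c (f x))"
  by (induction A rule: infinite_finite_induct) (auto simp: smult_add_right)

lemma bj_le:
  assumes "subbundle_emb (replicate n a) bs M" "j < length bs"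
  shows "bs!j \<le> a"
proof (rule ccontr)
  assume "\<not> bs!j \<le> a"
  then have z: "\<And>i. i < n \<Longrightarrow> M i j = 0"
    using assms unfolding subbundle_emb_def by (auto simp: hform_def)
  have inj: "inj_matrix n (length bs) (fibre_aff (replicate n a) bs M 0)"
    using assms(1) by (simp add: subbundle_emb_def)
  define c where "c = (\<lambda>l::nat. if l = j then (1::'a) else 0)"
  have "\<forall>i<n. (\<Sum>l<length bs. fibre_aff (replicate n a) bs M 0 i l * c l) = 0"
  proof (intro allI impI)
    fix i assume "i < n"
    then show "(\<Sum>l<length bs. fibre_aff (replicate n a) bs M 0 i l * c l) = 0"
      using z by (intro sum.neutral) (auto simp: c_def fibre_aff_def)
  qed
  with inj assms(2) have "c j = 0" unfolding inj_matrix_def by blast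
  then show False by (simp add: c_def)
qed

definition colsM :: "nat \<Rightarrow> nat \<Rightarrow> (nat \<Rightarrow> nat \<Rightarrow> 'k::field poly) \<Rightarrow> (nat \<Rightarrow> 'k) list" where
  "colsM n m M = map (\<lambda>j i. if i < n then coeff (M i j) 0 else 0) [0..<m]"

lemma length_colsM[simp]: "length (colsM n m M) = m" by (simp add: colsM_def)

lemma coeff_mult_const:
  assumes "k = 0 \<or> degree p = 0"
  shows "coeff (p * q) k = coeff p 0 * coeff q k"
  using assms
proof
  assume "degree p = 0"
  then obtain c where "p = [:c:]" using degree0_coeffs by blast
  then show ?thesis by simp
qed (simp add: coeff_mult_0)

lemma cv_sub:
  assumes "s \<in> sub_sections (replicate n a) bs M"
    and "k = 0 \<or> (\<forall>i<n. \<forall>j<length bs. degree (M i j) = 0)"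
  shows "cv n k s \<in> fv.span (set (colsM n (length bs) M))"
proof -
  obtain q where s: "s = (\<lambda>i. if i < n then (\<Sum>j<length bs. M i j * q j) else 0)"
    using assms(1) by (auto simp: sub_sections_def)
  have "cv n k s = lcomb (\<lambda>j. coeff (q j) k) (colsM n (length bs) M)"
  proof
    fix i
    show "cv n k s i = lcomb (\<lambda>j. coeff (q j) k) (colsM n (length bs) M) i"
    proof (cases "i < n")
      case True
      have "coeff (\<Sum>j<length bs. M i j * q j) k = (\<Sum>j<length bs. coeff (q j) k * coeff (M i j) 0)"
        unfolding coeff_sum
        by (intro sum.cong refl, subst coeff_mult_const) (use assms(2) True in \<open>auto simp: mult.commute\<close>)
      then show ?thesis using True by (simp add: cv_def s lcomb_def colsM_def)
    qed (simp add: cv_def s lcomb_def colsM_def)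
  qed
  then show ?thesis using lcomb_in_span by metis
qed

lemma us_lindep:
  assumes li: "lin_indep ws" and sp: "set ws \<subseteq> lspan (vsl n)"
  shows "lindep (map (cv n 0) ws)"
  unfolding lindep_def
proof (intro allI impI)
  fix d l assume d: "lcomb d (map (cv n 0) ws) = (\<lambda>_. 0)" and l: "l < length (map (cv n 0) ws)"
  have "\<forall>l. \<exists>c. l < length ws \<longrightarrow> ws!l = lin_comb c (vsl n)"
    using sp by (auto simp: lspan_def subset_iff in_set_conv_nth)
  then obtain C where C: "\<And>l. l < length ws \<Longrightarrow> ws!l = lin_comb (C l) (vsl n)" by metis
  define e where "e = (\<lambda>j. \<Sum>l<length ws. d l * C l j)"
  have e0: "e j = 0" if j: "j < n" for j
  proof -
    have "lcomb d (map (cv n 0) ws) j = (\<Sum>l<length ws. d l * restr n (C l) j)"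
      unfolding lcomb_def using C by (auto intro!: sum.cong simp: cv0_vsl)
    then show ?thesis using d j by (simp add: e_def restr_def)
  qed
  have "lin_comb d ws = lin_comb e (vsl n)"
  proof
    fix i
    have "lin_comb d ws i = (\<Sum>l<length ws. Polynomial.smult (d l) (\<Sum>j<n. Polynomial.smult (C l j) (vsec n j i)))"
      unfolding lin_comb_def using C by (auto intro!: sum.cong simp: lin_comb_def)
    also have "\<dots> = (\<Sum>l<length ws. \<Sum>j<n. Polynomial.smult (d l * C l j) (vsec n j i))"
      by (simp add: smult_sum_right)
    also have "\<dots> = (\<Sum>j<n. \<Sum>l<length ws. Polynomial.smult (d l * C l j) (vsec n j i))"
      by (rule sum.swap)
    also have "\<dots> = lin_comb e (vsl n) i"
      by (simp add: lin_comb_def e_def smult_sum)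
    finally show "lin_comb d ws i = lin_comb e (vsl n) i" .
  qed
  also have "\<dots> = (\<lambda>_. 0)" using e0 by (auto simp: lin_comb_def fun_eq_iff)
  finally show "d l = 0" using li l by (auto simp: lin_indep_def)
qed



lemma span_closed_lin:
  fixes f :: "(nat \<Rightarrow> 'k::field) \<Rightarrow> (nat \<Rightarrow> 'k)"
  assumes add: "\<And>x y. f (x + y) = f x + f y" and sc: "\<And>c x. f (\<lambda>i. c * x i) = (\<lambda>i. c * f x i)"
    and B: "\<And>u. u \<in> B \<Longrightarrow> f u \<in> fv.span B" and y: "y \<in> fv.span B"
  shows "f y \<in> fv.span B"
proof -
  have "fv.subspace {y. f y \<in> fv.span B}"
    unfolding fv.subspace_def
  proof (intro conjI ballI allI)
    have "f 0 = f 0 + f 0" using add[of 0 0] by simp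
    hence "f 0 = 0" by simp
    then show "0 \<in> {y. f y \<in> fv.span B}" by (simp add: fv.span_zero)
  next
    fix x y assume "x \<in> {y. f y \<in> fv.span B}" "y \<in> {y. f y \<in> fv.span B}"
    then show "x + y \<in> {y. f y \<in> fv.span B}" by (simp add: add fv.span_add)
  next
    fix c x assume "x \<in> {y. f y \<in> fv.span B}"
    then show "(\<lambda>i. c * x i) \<in> {y. f y \<in> fv.span B}"
      using fv.span_scale[of "f x" B c] by (simp add: sc)
  qed
  from fv.span_induct[OF y this] B show ?thesis by auto
qed

lemma Rop_add: "Rop n (x + y) = Rop n x + Rop n y" by (auto simp: Rop_def fun_eq_iff)
lemma Rop_sc: "Rop n (\<lambda>i. c * x i) = (\<lambda>i. c * Rop n x i)" by (auto simp: Rop_def fun_eq_iff)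
lemma Lop_add: "Lop n (x + y) = Lop n x + Lop n y" by (auto simp: Lop_def fun_eq_iff)
lemma Lop_sc: "Lop n (\<lambda>i. c * x i) = (\<lambda>i. c * Lop n x i)" by (auto simp: Lop_def fun_eq_iff)

lemma span_zero_outside:
  assumes "\<forall>u\<in>B. \<forall>i\<ge>n. u i = 0" "y \<in> fv.span B" "n \<le> i"
  shows "y i = (0::'k::field)"
proof -
  have "fv.subspace {y. \<forall>i\<ge>n. y i = (0::'k)}"
    unfolding fv.subspace_def by auto
  from fv.span_induct[OF assms(2) this] assms show ?thesis by auto
qed

lemma no_const_sub:
  fixes us cols :: "(nat \<Rightarrow> 'k::field) list"
  assumes li: "lindep us" and len: "length us = length cols" and lc: "length cols < n" and ne: "us \<noteq> []"
   and zo: "\<forall>u\<in>set us. \<forall>i\<ge>n. u i = 0"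
   and sp: "\<forall>u\<in>set us. u \<in> fv.span (set cols) \<and> Rop n u \<in> fv.span (set cols) \<and> Lop n u \<in> fv.span (set cols)"
  shows False
proof -
  let ?S = "fv.span (set us)"
  have dist: "distinct us" by (rule lindep_distinct[OF li])
  have ind: "fv.independent (set us)" by (rule lindep_independent[OF li])
  have sub: "y \<in> ?S" if y: "y \<in> fv.span (set cols)" for y
  proof (rule ccontr)
    assume "y \<notin> ?S"
    then have "fv.independent (insert y (set us))" using fv.independent_insertI ind by blast
    moreover have "insert y (set us) \<subseteq> fv.span (set cols)" using y sp by auto
    ultimately have "card (insert y (set us)) \<le> card (set cols)"
      using fv.independent_span_bound by blast
    moreover have "card (insert y (set us)) = Suc (length us)"
    proof -
      have "y \<notin> set us" using \<open>y \<notin> ?S\<close> fv.span_base[of y "set us"] by blast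
      then show ?thesis using distinct_card[OF dist] by simp
    qed
    moreover have "card (set cols) \<le> length cols" by (rule card_length)
    ultimately show False using len by simp
  qed
  have RS: "Rop n y \<in> ?S" if "y \<in> ?S" for y
    by (rule span_closed_lin[OF Rop_add Rop_sc _ that]) (use sp sub in auto)
  have LS: "Lop n y \<in> ?S" if "y \<in> ?S" for y
    by (rule span_closed_lin[OF Lop_add Lop_sc _ that]) (use sp sub in auto)
  have zS: "y i = 0" if "y \<in> ?S" "n \<le> i" for y i
    using span_zero_outside[OF zo that] .
  define u0 where "u0 = us ! 0"
  have u0S: "u0 \<in> ?S" using ne by (auto simp: u0_def intro!: fv.span_base)
  have "u0 \<noteq> (\<lambda>_. 0)"
  proof
    assume u0z: "u0 = (\<lambda>_. 0)"
    define d where "d = (\<lambda>l::nat. if l = 0 then (1::'k) else 0)"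
    have "lcomb d us = (\<lambda>_. 0)"
    proof
      fix i
      have "(\<Sum>l<length us. d l * (us!l) i) = (\<Sum>l<length us. if l = 0 then (us!0) i else 0)"
        by (intro sum.cong) (auto simp: d_def)
      also have "\<dots> = 0" using u0z ne by (simp add: u0_def)
      finally show "lcomb d us i = 0" by (simp add: lcomb_def)
    qed
    then show False using li ne by (auto simp: lindep_def d_def dest!: spec[of _ d])
  qed
  then obtain k where k: "u0 k \<noteq> 0" by auto
  have kn: "k < n" using zS[OF u0S, of k] k by (cases "k < n") auto
  have Lpow: "(Lop n ^^ t) u0 = (\<lambda>i. if i + t < n then u0 (i + t) else 0)" for t
  proof (induction t)
    case 0 then show ?case using zS[OF u0S] by (auto simp: fun_eq_iff)
  next
    case (Suc t) then show ?case by (auto simp: fun_eq_iff Lop_def)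
  qed
  have LpowS: "(Lop n ^^ t) u0 \<in> ?S" for t
    by (induction t) (auto simp: u0S LS)
  define y where "y = (Lop n ^^ k) u0"
  have yS: "y \<in> ?S" unfolding y_def by (rule LpowS)
  have y0: "y 0 = u0 k" using kn by (simp add: y_def Lpow)
  have zS2: "y - Rop n (Lop n y) \<in> ?S" by (intro fv.span_diff yS RS LS)
  have "y - Rop n (Lop n y) = (\<lambda>i. if i = 0 then y 0 else 0)"
  proof
    fix i
    show "(y - Rop n (Lop n y)) i = (if i = 0 then y 0 else 0)"
    proof (cases "i < n")
      case True then show ?thesis by (auto simp: Rop_def Lop_def)
    next
      case False then show ?thesis using zS[OF yS, of i] by (auto simp: Rop_def)
    qed
  qed
  with zS2 have "(\<lambda>i. if i = 0 then y 0 else 0) \<in> ?S" by simp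
  from fv.span_scale[OF this, of "inverse (y 0)"]
  have e0: "(\<lambda>i. if i = 0 then 1 else 0) \<in> ?S" using k y0 by (simp add: if_distrib cong: if_cong)
  define e where "e = (\<lambda>t i::nat. if i = t then (1::'k) else 0)"
  have eS: "t < n \<Longrightarrow> e t \<in> ?S" for t
  proof (induction t)
    case 0 then show ?case using e0 by (simp add: e_def eq_commute)
  next
    case (Suc t)
    then have "Rop n (e t) \<in> ?S" by (intro RS) simp
    moreover have "Rop n (e t) = e (Suc t)" using Suc.prems by (auto simp: Rop_def e_def fun_eq_iff)
    ultimately show ?case by simp
  qed
  have "lindep (map e [0..<n])"
    unfolding lindep_def
  proof (intro allI impI)
    fix d l assume d: "lcomb d (map e [0..<n]) = (\<lambda>_. 0)" and l: "l < length (map e [0..<n])"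
    have "lcomb d (map e [0..<n]) l = (\<Sum>j<n. if j = l then d j else 0)"
      unfolding lcomb_def by (intro sum.cong) (auto simp: e_def)
    then show "d l = 0" using d l by simp
  qed
  moreover have "set (map e [0..<n]) \<subseteq> ?S" using eS by auto
  ultimately have "length (map e [0..<n]) \<le> length us" by (rule count_bound)
  then show False using len lc by simp
qed



lemma construct:
  fixes \<alpha> :: real and a :: int
  assumes n: "2 \<le> n" and a: "2 \<le> a" and al: "0 < \<alpha>"
  shows "alpha_stable \<alpha> (replicate n a) (vsl n :: (nat \<Rightarrow> 'k::field poly) list)"
  unfolding alpha_stable_def
proof (intro conjI allI impI)
  let ?as = "replicate n a" and ?vs = "vsl n :: (nat \<Rightarrow> 'k poly) list"
  show "coh_system ?as ?vs" unfolding coh_system_def by (intro conjI vsl_sections[OF a] vsl_indep)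
  show "?as \<noteq> []" using n by auto
  fix bs M ws
  assume H: "bs \<noteq> [] \<and> length bs \<le> length ?as \<and> subbundle_emb ?as bs M \<and>
        lin_indep ws \<and> set ws \<subseteq> lspan ?vs \<inter> sub_sections ?as bs M \<and>
        (length bs < length ?as \<or> length ws < length ?vs)"
  then have bs0: "bs \<noteq> []" and mn: "length bs \<le> n" and emb: "subbundle_emb ?as bs M"
    and li: "lin_indep ws" and wsp: "set ws \<subseteq> lspan ?vs" and wss: "set ws \<subseteq> sub_sections ?as bs M"
    and prp: "length bs < n \<or> length ws < n" by auto
  let ?m = "length bs" and ?w = "length ws"
  have m0: "0 < ?m" using bs0 by simp
  have mu_r: "mu \<alpha> (int (length ?as)) (bdeg ?as) (length ?vs) = of_int a + \<alpha>"
  proof -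
    have "0 < real n" using n by simp
    then show ?thesis by (simp add: mu_def bdeg_def sum_list_replicate)
  qed
  have mu_l: "mu \<alpha> (int ?m) (bdeg bs) ?w = (of_int (bdeg bs) + \<alpha> * real ?w) / real ?m"
    by (simp add: mu_def add_divide_distrib)
  have bj: "\<And>j. j < ?m \<Longrightarrow> bs!j \<le> a" using bj_le[OF emb] by blast
  have bdeq: "bdeg bs = (\<Sum>j<?m. bs!j)" by (simp add: bdeg_def sum_list_sum_nth atLeast0LessThan)
  have ele: "bdeg bs \<le> a * int ?m"
  proof -
    have "(\<Sum>j<?m. bs!j) \<le> (\<Sum>j<?m. a)" using bj by (intro sum_mono) auto
    then show ?thesis using bdeq by (simp add: mult.commute)
  qed
  let ?us = "map (cv n 0) ws"
  have usl: "lindep ?us" using us_lindep[OF li wsp] .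
  have cols0: "set ?us \<subseteq> fv.span (set (colsM n ?m M))"
  proof
    fix u assume "u \<in> set ?us"
    then obtain s where s: "s \<in> set ws" "u = cv n 0 s" by auto
    have "s \<in> sub_sections ?as bs M" using s(1) wss by blast
    from cv_sub[OF this, of 0] s(2) show "u \<in> fv.span (set (colsM n ?m M))" by simp
  qed
  have wm: "?w \<le> ?m" using count_bound[OF usl cols0] by simp
  have goal: "(of_int (bdeg bs) + \<alpha> * real ?w) / real ?m < of_int a + \<alpha>"
  proof -
    have mpos: "0 < real ?m" using m0 by simp
    have dist: "(of_int a + \<alpha>) * real ?m = of_int a * real ?m + \<alpha> * real ?m"
      by (simp add: distrib_right)
    have r1: "real_of_int (bdeg bs) \<le> real_of_int a * real ?m"
    proof -
      have "real_of_int (bdeg bs) \<le> real_of_int (a * int ?m)" using ele by (simp only: of_int_le_iff)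
      also have "\<dots> = real_of_int a * real ?m" by simp
      finally show ?thesis .
    qed
    have "of_int (bdeg bs) + \<alpha> * real ?w < (of_int a + \<alpha>) * real ?m"
    proof (cases "?w < ?m")
      case True
      have "\<alpha> * real ?w < \<alpha> * real ?m" using True al by (simp add: mult_strict_left_mono)
      then show ?thesis using r1 dist by linarith
    next
      case False
      then have wmeq: "?w = ?m" using wm by simp
      then have mlt: "?m < n" using prp mn by auto
      show ?thesis
      proof (cases "bdeg bs < a * int ?m")
        case True
        have "real_of_int (bdeg bs) < real_of_int (a * int ?m)" using True by (simp only: of_int_less_iff)
        also have "\<dots> = real_of_int a * real ?m" by simp
        finally have "real_of_int (bdeg bs) < real_of_int a * real ?m" .
        moreover have "\<alpha> * real ?w = \<alpha> * real ?m" using wmeq by simp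
        ultimately show ?thesis using dist by linarith
    next
      case False
      then have eq: "bdeg bs = a * int ?m" using ele by simp
      have alla: "bs!j = a" if j: "j < ?m" for j
      proof -
        have "(\<Sum>j<?m. a - bs!j) = (\<Sum>j<?m. a) - (\<Sum>j<?m. bs!j)" by (rule sum_subtractf)
        also have "\<dots> = 0" using eq bdeq by (simp add: mult.commute)
        finally have "(\<Sum>j<?m. a - bs!j) = 0" .
        moreover have "\<forall>j\<in>{..<?m}. 0 \<le> a - bs!j" using bj by auto
        ultimately have "\<forall>j\<in>{..<?m}. a - bs!j = 0"
          using sum_nonneg_eq_0_iff[of "{..<?m}" "\<lambda>j. a - bs!j"] by simp
        then show ?thesis using j by auto
      qed
      have const: "\<forall>i<n. \<forall>j<?m. degree (M i j) = 0"
      proof (intro allI impI)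
        fix i j assume "i < n" "j < ?m"
        have "\<forall>i<length ?as. \<forall>j<length bs. hform (?as!i - bs!j) (M i j)"
          using emb unfolding subbundle_emb_def by blast
        then have "hform (a - bs!j) (M i j)" using \<open>i < n\<close> \<open>j < ?m\<close> by simp
        then show "degree (M i j) = 0" using alla[OF \<open>j < ?m\<close>] by (simp add: hform_def)
      qed
      have sp: "\<forall>u\<in>set ?us. u \<in> fv.span (set (colsM n ?m M)) \<and> Rop n u \<in> fv.span (set (colsM n ?m M))
          \<and> Lop n u \<in> fv.span (set (colsM n ?m M))"
      proof
        fix u assume "u \<in> set ?us"
        then obtain s where s: "s \<in> set ws" "u = cv n 0 s" by auto
        then obtain c where c: "s = lin_comb c ?vs" using wsp by (auto simp: lspan_def)
        have ss: "s \<in> sub_sections ?as bs M" using s(1) wss by blast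
        have "cv n 1 s \<in> fv.span (set (colsM n ?m M))" "cv n 2 s \<in> fv.span (set (colsM n ?m M))"
          using cv_sub[OF ss, of 1] cv_sub[OF ss, of 2] const by blast+
        moreover have "Rop n u = cv n 1 s" by (simp only: s(2) c cv0_vsl cv1_vsl)
        moreover have "Lop n u = cv n 2 s" by (simp only: s(2) c cv0_vsl cv2_vsl)
        ultimately show "u \<in> fv.span (set (colsM n ?m M)) \<and> Rop n u \<in> fv.span (set (colsM n ?m M))
          \<and> Lop n u \<in> fv.span (set (colsM n ?m M))" using cols0 \<open>u \<in> set ?us\<close> by auto
      qed
      have l1: "length ?us = length (colsM n ?m M)" using wmeq by simp
      have l2: "length (colsM n ?m M) < n" using mlt by simp
      have l3: "?us \<noteq> []" using wmeq m0 by auto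
      have l4: "\<forall>u\<in>set ?us. \<forall>i\<ge>n. u i = 0" by (auto simp: cv_def)
      have "False" by (rule no_const_sub[OF usl l1 l2 l3 l4 sp])
      then show ?thesis ..
    qed
  qed
    then show ?thesis using mpos by (simp add: pos_divide_less_eq)
  qed
  then show "mu \<alpha> (int ?m) (bdeg bs) ?w < mu \<alpha> (int (length ?as)) (bdeg ?as) (length ?vs)"
    using mu_l mu_r by simp
qed

theorem proposition9p1:
  fixes n :: nat and a :: int and \<alpha> :: real
  assumes "n \<ge> 2"
  shows "G_nonempty TYPE('k::alg_closed_field) \<alpha> n (int n * a) n \<longleftrightarrow> (a \<ge> 2 \<and> \<alpha> > 0)"
proof
  assume "G_nonempty TYPE('k::alg_closed_field) \<alpha> n (int n * a) n"
  then obtain as and vs :: "(nat \<Rightarrow> 'k poly) list" where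
    h: "length as = n" "bdeg as = int n * a" "length vs = n" "alpha_stable \<alpha> as vs"
    unfolding G_nonempty_def by blast
  show "a \<ge> 2 \<and> \<alpha> > 0" by (rule only_if[of as vs]) (use h assms in auto)
next
  assume "a \<ge> 2 \<and> \<alpha> > 0"
  then have st: "alpha_stable \<alpha> (replicate n a) (vsl n :: (nat \<Rightarrow> 'k poly) list)"
    using construct assms by blast
  show "G_nonempty TYPE('k::alg_closed_field) \<alpha> n (int n * a) n"
    unfolding G_nonempty_def
    by (intro exI[of _ "replicate n a"] exI[of _ "vsl n :: (nat \<Rightarrow> 'k poly) list"])
       (use st in \<open>auto simp: bdeg_def sum_list_replicate\<close>)
qed

end
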